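(* Let $g,h\in G(\Gamma)$ with $|h|_r=m$ and $|g|_r=n$. Then there exist integers $0\le q\le\min(m,n)$ and $0\le p\le\kappa$ and reduced words $g\equiv g_1\cdots g_n$, $h\equiv h_1\cdots h_m$ (with $g_i\in G_{v_i}$, $h_i\in G_{w_i}$) such that: $g_i=h_i$ for $1\le i\le q$; for $q<i\le q+p$ the syllables $g_i$ and $h_i$ lie in the same vertex group $G_{v_i}$ and $h_i\neq g_i$; the word $$h_m^{-1}\cdots h_{q+p+1}^{-1}\,(h_{q+1}^{-1}g_{q+1})\cdots(h_{q+p}^{-1}g_{q+p})\,g_{q+p+1}\cdots g_n$$ is a reduced word representing $h^{-1}g$ (each parenthesized product being a single syllable); and for all $1\le i,j\le p$ the vertex $v_{q+j}$ lies in $\mathrm{st}(v_{q+i})$, i.e. $g_{q+j},h_{q+j}\in G(\mathrm{st}(v_{q+i}))$.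
   Context: $\Gamma$ is a finite simplicial graph, $\{G_v\}_{v\in\Gamma}$ are groups, and $G(\Gamma)$ is their graph product: the quotient of $\ast_vG_v$ by the normal subgroup generated by $[G_v,G_w]$ for all edges $[vw]$ of $\Gamma$. Vertices joined by an edge are adjacent; $\mathrm{lk}(v)$ is the set of vertices adjacent to $v$, $\mathrm{st}(v)=\mathrm{lk}(v)\cup\{v\}$, and $G(\mathrm{lk}(v))$, $G(\mathrm{st}(v))$ denote the subgroups generated by the $G_w$ with $w$ in these sets. $\kappa$ is the maximal number of pairwise adjacent vertices of $\Gamma$. A word is a finite sequence $(g_1,\dots,g_n)$ with $g_i\in G_{v_i}$ (its syllables); it represents $g_1\cdots g_n$. Allowed moves: swapping two consecutive syllables from adjacent vertex groups (shuffle), multiplying two consecutive syllables from the same vertex group into one, deleting an identity syllable. A word is reduced if no sequence of moves shortens it. Every element has a reduced word and any two reduced words for the same element differ by shuffles; we write $g\equiv g_1\cdots g_n$ for a reduced word of $g$ and $|g|_r=n$ for the reduced word length. *)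

theory Defs
  imports "HOL-Algebra.Group"
begin

type_synonym ('v, 'g) syllable = "'v \<times> 'g"

definition valid_word :: "'v set \<Rightarrow> ('v \<Rightarrow> ('g, 'b) monoid_scheme) \<Rightarrow> ('v, 'g) syllable list \<Rightarrow> bool" where
  "valid_word V G w \<longleftrightarrow> (\<forall>(v, x) \<in> set w. v \<in> V \<and> x \<in> carrier (G v))"

inductive move :: "'v set \<Rightarrow> ('v \<Rightarrow> 'v \<Rightarrow> bool) \<Rightarrow> ('v \<Rightarrow> ('g, 'b) monoid_scheme)
    \<Rightarrow> ('v, 'g) syllable list \<Rightarrow> ('v, 'g) syllable list \<Rightarrow> bool"
  for V adj G where
  shuffle: "valid_word V G (ws @ [(v, x), (w, y)] @ us) \<Longrightarrow> adj v w \<Longrightarrow>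
     move V adj G (ws @ [(v, x), (w, y)] @ us) (ws @ [(w, y), (v, x)] @ us)"
| merge: "valid_word V G (ws @ [(v, x), (v, y)] @ us) \<Longrightarrow>
     move V adj G (ws @ [(v, x), (v, y)] @ us) (ws @ [(v, x \<otimes>\<^bsub>G v\<^esub> y)] @ us)"
| delete: "valid_word V G (ws @ [(v, \<one>\<^bsub>G v\<^esub>)] @ us) \<Longrightarrow>
     move V adj G (ws @ [(v, \<one>\<^bsub>G v\<^esub>)] @ us) (ws @ us)"

text \<open>Two valid words represent the same element of the graph product G(\<Gamma>) iff they are
related by the equivalence generated by the moves (this is the standard presentation of
the graph product as the free product modulo the commutation relations).\<close>

definition word_equiv :: "'v set \<Rightarrow> ('v \<Rightarrow> 'v \<Rightarrow> bool) \<Rightarrow> ('v \<Rightarrow> ('g, 'b) monoid_scheme)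
    \<Rightarrow> ('v, 'g) syllable list \<Rightarrow> ('v, 'g) syllable list \<Rightarrow> bool" where
  "word_equiv V adj G = equivclp (move V adj G)"

definition reduced :: "'v set \<Rightarrow> ('v \<Rightarrow> 'v \<Rightarrow> bool) \<Rightarrow> ('v \<Rightarrow> ('g, 'b) monoid_scheme)
    \<Rightarrow> ('v, 'g) syllable list \<Rightarrow> bool" where
  "reduced V adj G w \<longleftrightarrow> valid_word V G w \<and>
     \<not> (\<exists>w'. (move V adj G)\<^sup>*\<^sup>* w w' \<and> length w' < length w)"

definition word_inv :: "('v \<Rightarrow> ('g, 'b) monoid_scheme) \<Rightarrow> ('v, 'g) syllable list \<Rightarrow> ('v, 'g) syllable list" where
  "word_inv G w = rev (map (\<lambda>(v, x). (v, inv\<^bsub>G v\<^esub> x)) w)"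

definition clique :: "'v set \<Rightarrow> ('v \<Rightarrow> 'v \<Rightarrow> bool) \<Rightarrow> 'v set \<Rightarrow> bool" where
  "clique V adj C \<longleftrightarrow> C \<subseteq> V \<and> (\<forall>u\<in>C. \<forall>w\<in>C. u \<noteq> w \<longrightarrow> adj u w)"

definition clique_number :: "'v set \<Rightarrow> ('v \<Rightarrow> 'v \<Rightarrow> bool) \<Rightarrow> nat" where
  "clique_number V adj = Max {card C | C. clique V adj C}"

definition star :: "('v \<Rightarrow> 'v \<Rightarrow> bool) \<Rightarrow> 'v \<Rightarrow> 'v set" where
  "star adj v = {w. adj v w} \<union> {v}"

end

theory Submission
  imports Defs
begin


locale gp =
  fixes V :: "'v set" and adj :: "'v \<Rightarrow> 'v \<Rightarrow> bool"
    and G :: "'v \<Rightarrow> ('g, 'b) monoid_scheme"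
  assumes adjV: "\<And>u w. adj u w \<Longrightarrow> u \<in> V \<and> w \<in> V"
    and adj_sym: "\<And>u w. adj u w \<Longrightarrow> adj w u"
    and adj_irr: "\<And>u. \<not> adj u u"
    and grp: "\<And>v. v \<in> V \<Longrightarrow> group (G v)"
begin

abbreviation "valid \<equiv> valid_word V G"
abbreviation "mv \<equiv> move V adj G"
abbreviation "weq \<equiv> word_equiv V adj G"
abbreviation "winv \<equiv> word_inv G"

definition shf1 where "shf1 a b \<longleftrightarrow> mv a b \<and> length b = length a"
abbreviation "shf \<equiv> shf1\<^sup>*\<^sup>*"

lemma valid_append[simp]: "valid (a @ b) \<longleftrightarrow> valid a \<and> valid b"
  by (auto simp: valid_word_def)
lemma valid_Cons[simp]: "valid (x # b) \<longleftrightarrow> fst x \<in> V \<and> snd x \<in> carrier (G (fst x)) \<and> valid b"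
  by (auto simp: valid_word_def)
lemma valid_Nil[simp]: "valid []"
  by (auto simp: valid_word_def)

lemma winv_append[simp]: "winv (a @ b) = winv b @ winv a"
  by (simp add: word_inv_def)
lemma winv_Cons[simp]: "winv (x # b) = winv b @ [(fst x, inv\<^bsub>G (fst x)\<^esub> snd x)]"
  by (simp add: word_inv_def split: prod.splits)
lemma winv_Nil[simp]: "winv [] = []"
  by (simp add: word_inv_def)
lemma length_winv[simp]: "length (winv a) = length a"
  by (simp add: word_inv_def)

lemma valid_winv: "valid a \<Longrightarrow> valid (winv a)"
  by (induction a) (auto intro: group.inv_closed grp)

lemma move_valid: "mv a b \<Longrightarrow> valid a \<and> valid b"
  by (induction rule: move.induct) (auto intro: monoid.m_closed group.is_monoid grp)

lemma move_length: "mv a b \<Longrightarrow> length b \<le> length a"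
  by (induction rule: move.induct) auto

lemma move_ctxt: "mv a b \<Longrightarrow> valid X \<Longrightarrow> valid Y \<Longrightarrow> mv (X @ a @ Y) (X @ b @ Y)"
proof (induction rule: move.induct)
  case (shuffle ws v x w y us)
  then show ?case using move.shuffle[where ws="X @ ws" and us="us @ Y" and V=V and G=G and adj=adj] by simp
next
  case (merge ws v x y us)
  then show ?case using move.merge[where ws="X @ ws" and us="us @ Y" and V=V and G=G and adj=adj] by simp
next
  case (delete ws v us)
  then show ?case using move.delete[where ws="X @ ws" and us="us @ Y" and V=V and G=G and adj=adj] by simp
qed

lemma weq_ctxt: "weq a b \<Longrightarrow> valid X \<Longrightarrow> valid Y \<Longrightarrow> weq (X @ a @ Y) (X @ b @ Y)"
  unfolding word_equiv_def
proof (induction rule: equivclp_induct)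
  case base then show ?case by simp
next
  case (step y z)
  then show ?case by (meson equivclp_into_equivclp move_ctxt)
qed

lemma move_winv: "mv a b \<Longrightarrow> mv (winv a) (winv b)"
proof (induction rule: move.induct)
  case (shuffle ws v x w y us)
  then have "valid (winv us @ [(w, inv\<^bsub>G w\<^esub> y), (v, inv\<^bsub>G v\<^esub> x)] @ winv ws)"
    using valid_winv[of "ws @ [(v, x), (w, y)] @ us"] by simp
  then show ?case using move.shuffle[where ws="winv us" and v=w and x="inv\<^bsub>G w\<^esub> y" and w=v and y="inv\<^bsub>G v\<^esub> x" and us="winv ws" and V=V and G=G and adj=adj] shuffle adj_sym
    by simp
next
  case (merge ws v x y us)
  then have v: "v \<in> V" "x \<in> carrier (G v)" "y \<in> carrier (G v)" by auto
  have "valid (winv us @ [(v, inv\<^bsub>G v\<^esub> y), (v, inv\<^bsub>G v\<^esub> x)] @ winv ws)"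
    using valid_winv[of "ws @ [(v, x), (v, y)] @ us"] merge by simp
  moreover have "inv\<^bsub>G v\<^esub> y \<otimes>\<^bsub>G v\<^esub> inv\<^bsub>G v\<^esub> x = inv\<^bsub>G v\<^esub> (x \<otimes>\<^bsub>G v\<^esub> y)"
    using v grp[of v] by (simp add: group.inv_mult_group)
  ultimately show ?case using move.merge[where ws="winv us" and v=v and x="inv\<^bsub>G v\<^esub> y" and y="inv\<^bsub>G v\<^esub> x" and us="winv ws" and V=V and G=G and adj=adj] by simp
next
  case (delete ws v us)
  then have v: "v \<in> V" by auto
  have "valid (winv us @ [(v, inv\<^bsub>G v\<^esub> \<one>\<^bsub>G v\<^esub>)] @ winv ws)"
    using valid_winv[of "ws @ [(v, \<one>\<^bsub>G v\<^esub>)] @ us"] delete by simp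
  moreover have "inv\<^bsub>G v\<^esub> \<one>\<^bsub>G v\<^esub> = \<one>\<^bsub>G v\<^esub>" using grp[OF v] by (simp add: monoid.inv_one group.is_monoid)
  ultimately show ?case using move.delete[where ws="winv us" and v=v and us="winv ws" and V=V and G=G and adj=adj] by simp
qed

lemma weq_winv: "weq a b \<Longrightarrow> weq (winv a) (winv b)"
  unfolding word_equiv_def
proof (induction rule: equivclp_induct)
  case base then show ?case by simp
next
  case (step y z)
  then show ?case by (meson equivclp_into_equivclp move_winv)
qed

lemma shf_move: "shf a b \<Longrightarrow> mv\<^sup>*\<^sup>* a b"
proof (induction rule: rtranclp_induct)
  case base then show ?case by simp
next
  case (step y z) then show ?case unfolding shf1_def by (meson rtranclp.rtrancl_into_rtrancl)
qed

lemma shf_weq: "shf a b \<Longrightarrow> weq a b"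
proof -
  assume "shf a b"
  then have "mv\<^sup>*\<^sup>* a b" by (rule shf_move)
  then show ?thesis unfolding word_equiv_def using rtranlcp_le_equivclp[of "mv"] by (simp add: le_fun_def)
qed

lemma shf_length: "shf a b \<Longrightarrow> length b = length a"
proof (induction rule: rtranclp_induct)
  case base then show ?case by simp
next
  case (step y z) then show ?case unfolding shf1_def by simp
qed

lemma shf_valid: "shf a b \<Longrightarrow> valid a \<Longrightarrow> valid b"
proof (induction rule: rtranclp_induct)
  case base then show ?case by simp
next
  case (step y z) then show ?case unfolding shf1_def using move_valid by blast
qed

lemma shf_swap: "valid (ws @ [a, b] @ us) \<Longrightarrow> adj (fst a) (fst b) \<Longrightarrow> shf (ws @ [a, b] @ us) (ws @ [b, a] @ us)"
  using move.shuffle[where ws=ws and v="fst a" and x="snd a" and w="fst b" and y="snd b" and us=us and V=V and G=G and adj=adj]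
  by (auto simp: shf1_def)

lemma shf_front:
  "valid (A @ L @ [b] @ B) \<Longrightarrow> \<forall>l\<in>set L. adj (fst l) (fst b) \<Longrightarrow> shf (A @ L @ [b] @ B) (A @ [b] @ L @ B)"
proof (induction L arbitrary: B rule: rev_induct)
  case Nil then show ?case by simp
next
  case (snoc l L)
  have 1: "shf (A @ (L @ [l]) @ [b] @ B) (A @ L @ [b] @ (l # B))"
    using shf_swap[of "A @ L" l b B] snoc.prems by simp
  have "valid (A @ L @ [b] @ (l # B))" using snoc.prems by auto
  then have "shf (A @ L @ [b] @ (l # B)) (A @ [b] @ L @ (l # B))"
    using snoc by simp
  with 1 show ?case by simp
qed

end


context gp begin

definition pinch :: "'v list \<Rightarrow> bool" where
  "pinch vs \<longleftrightarrow> (\<exists>i j. i < j \<and> j < length vs \<and> vs ! i = vs ! j \<and> (\<forall>k. i < k \<and> k < j \<longrightarrow> adj (vs ! i) (vs ! k)))"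

definition pf where "pf w \<longleftrightarrow> \<not> pinch (map fst w)"
definition idf where "idf w \<longleftrightarrow> (\<forall>p\<in>set w. snd p \<noteq> \<one>\<^bsub>G (fst p)\<^esub>)"

lemma pinch_swap_aux:
  assumes len: "length vs' = length vs"
    and kk: "Suc k < length vs"
    and same: "\<And>l. l < length vs \<Longrightarrow> l \<noteq> k \<Longrightarrow> l \<noteq> Suc k \<Longrightarrow> vs' ! l = vs ! l"
    and sw1: "vs' ! k = vs ! Suc k" and sw2: "vs' ! Suc k = vs ! k"
    and ad: "adj (vs ! k) (vs ! Suc k)"
    and p: "pinch vs'"
  shows "pinch vs"
proof -
  from p obtain i j where ij: "i < j" "j < length vs'" "vs' ! i = vs' ! j"
    and btw: "\<And>l. i < l \<Longrightarrow> l < j \<Longrightarrow> adj (vs' ! i) (vs' ! l)"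
    unfolding pinch_def by blast
  let ?u = "vs' ! i"
  have P: "pinch vs" if "i' < j'" "j' < length vs" "vs ! i' = ?u" "vs ! j' = ?u"
     "\<And>l. i' < l \<Longrightarrow> l < j' \<Longrightarrow> adj ?u (vs ! l)" for i' j'
    unfolding pinch_def using that by metis
  consider "i = k \<and> j = Suc k" | "i \<noteq> k \<and> i \<noteq> Suc k \<and> j \<noteq> k \<and> j \<noteq> Suc k"
    | "i = k \<and> j > Suc k" | "i = Suc k" | "j = k" | "j = Suc k \<and> i < k"
    using ij by linarith
  then show ?thesis
  proof cases
    case 1
    then show ?thesis using ij sw1 sw2 ad adj_irr by metis
  next
    case 2
    show ?thesis
    proof (rule P[of i j])
      show "vs ! i = ?u" using same[of i] 2 ij len by simp
      show "vs ! j = ?u" using same[of j] 2 ij len by simp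
      fix l assume l: "i < l" "l < j"
      show "adj ?u (vs ! l)"
      proof (cases "l = k \<or> l = Suc k")
        case True
        then have "i < k" "Suc k < j" using l 2 by auto
        then show ?thesis using True btw[of k] btw[of "Suc k"] sw1 sw2 by auto
      next
        case False then show ?thesis using same[of l] btw[of l] l ij len by simp
      qed
    qed (use ij len in auto)
  next
    case 3
    show ?thesis
    proof (rule P[of "Suc k" j])
      show "vs ! Suc k = ?u" using 3 sw1 by simp
      show "vs ! j = ?u" using same[of j] 3 ij len by simp
      fix l assume l: "Suc k < l" "l < j"
      then show "adj ?u (vs ! l)" using same[of l] btw[of l] 3 ij len by simp
    qed (use 3 ij len in auto)
  next
    case 4
    show ?thesis
    proof (rule P[of k j])
      show "vs ! k = ?u" using 4 sw2 by simp
      show "vs ! j = ?u" using same[of j] 4 ij len by simp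
      fix l assume l: "k < l" "l < j"
      show "adj ?u (vs ! l)"
      proof (cases "l = Suc k")
        case True then show ?thesis using ad 4 sw2 by simp
      next
        case False then show ?thesis using same[of l] btw[of l] 4 l ij len by simp
      qed
    qed (use 4 ij len in auto)
  next
    case 5
    show ?thesis
    proof (rule P[of i "Suc k"])
      show "vs ! i = ?u" using same[of i] 5 ij len by simp
      show "vs ! Suc k = ?u" using 5 ij sw1 by simp
      fix l assume l: "i < l" "l < Suc k"
      show "adj ?u (vs ! l)"
      proof (cases "l = k")
        case True
        have "?u = vs ! Suc k" using 5 ij sw1 by simp
        then show ?thesis using True ad adj_sym by simp
      next
        case False then show ?thesis using same[of l] btw[of l] 5 l ij len by simp
      qed
    qed (use 5 ij kk len in auto)
  next
    case 6
    show ?thesis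
    proof (rule P[of i k])
      show "vs ! i = ?u" using same[of i] 6 ij len by simp
      show "vs ! k = ?u" using 6 ij sw2 by simp
      fix l assume l: "i < l" "l < k"
      then show "adj ?u (vs ! l)" using same[of l] btw[of l] 6 ij len by simp
    qed (use 6 ij kk len in auto)
  qed
qed

lemma pinch_swap:
  assumes "pinch (ws @ [b, a] @ us)" "adj a b"
  shows "pinch (ws @ [a, b] @ us)"
proof (rule pinch_swap_aux[where k = "length ws" and vs' = "ws @ [b, a] @ us"])
  fix l assume "l < length (ws @ [a, b] @ us)" "l \<noteq> length ws" "l \<noteq> Suc (length ws)"
  then show "(ws @ [b, a] @ us) ! l = (ws @ [a, b] @ us) ! l"
    by (auto simp: nth_append nth_Cons split: nat.splits)
qed (use assms in \<open>auto simp: nth_append\<close>)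

lemma shf1_pf: "shf1 w w' \<Longrightarrow> pf w \<Longrightarrow> pf w'"
  unfolding shf1_def
proof (elim conjE)
  assume m: "mv w w'" and l: "length w' = length w" and p: "pf w"
  from m show "pf w'"
  proof cases
    case (shuffle ws v x u y us)
    then show ?thesis using p pinch_swap[of "map fst ws" u v "map fst us"] adj_sym
      unfolding pf_def by auto
  qed (use l in auto)
qed

lemma shf1_idf: "shf1 w w' \<Longrightarrow> idf w \<Longrightarrow> idf w'"
  unfolding shf1_def
proof (elim conjE)
  assume m: "mv w w'" and l: "length w' = length w" and p: "idf w"
  from m show "idf w'"
  proof cases
    case (shuffle ws v x u y us)
    then show ?thesis using p unfolding idf_def by auto
  qed (use l in auto)
qed

lemma shf_pf: "shf w w' \<Longrightarrow> pf w \<Longrightarrow> pf w'"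
  by (induction rule: rtranclp_induct) (auto intro: shf1_pf)
lemma shf_idf: "shf w w' \<Longrightarrow> idf w \<Longrightarrow> idf w'"
  by (induction rule: rtranclp_induct) (auto intro: shf1_idf)

lemma good_reduced:
  assumes "valid w" "pf w" "idf w"
  shows "reduced V adj G w"
proof -
  have "length w' = length w \<and> valid w' \<and> pf w' \<and> idf w'" if "mv\<^sup>*\<^sup>* w w'" for w'
    using that
  proof (induction rule: rtranclp_induct)
    case base then show ?case using assms by simp
  next
    case (step y z)
    from step.hyps(2) show ?case
    proof cases
      case (shuffle ws v x u y' us)
      then have "shf1 y z" unfolding shf1_def using step.hyps(2) by simp
      have "length z = length y" using \<open>shf1 y z\<close> unfolding shf1_def by simp
      moreover have "valid z" using move_valid[OF step.hyps(2)] by simp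
      moreover have "pf z" using shf1_pf[OF \<open>shf1 y z\<close>] step.IH by simp
      moreover have "idf z" using shf1_idf[OF \<open>shf1 y z\<close>] step.IH by simp
      ultimately show ?thesis using step.IH by simp
    next
      case (merge ws v x y' us)
      then have "pinch (map fst y)"
        unfolding pinch_def by (rule_tac x="length ws" in exI, rule_tac x="Suc (length ws)" in exI) (auto simp: nth_append)
      then show ?thesis using step.IH unfolding pf_def by simp
    next
      case (delete ws v us)
      then show ?thesis using step.IH unfolding idf_def by auto
    qed
  qed
  note X = this
  show ?thesis unfolding reduced_def
  proof (intro conjI notI)
    show "valid w" by (rule assms(1))
    assume "\<exists>w'. mv\<^sup>*\<^sup>* w w' \<and> length w' < length w"
    then obtain w' where "mv\<^sup>*\<^sup>* w w'" "length w' < length w" by blast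
    then show False using X[of w'] by simp
  qed
qed

lemma decomp:
  assumes "i < j" "j < length w"
  shows "w = take i w @ [w ! i] @ take (j - i - 1) (drop (Suc i) w) @ [w ! j] @ drop (Suc j) w"
proof -
  have 1: "drop i w = w ! i # drop (Suc i) w" using assms by (simp add: Cons_nth_drop_Suc)
  have 2: "drop (j - i - 1) (drop (Suc i) w) = w ! j # drop (Suc j) w"
    using assms by (simp add: Cons_nth_drop_Suc)
  have 3: "drop (Suc i) w = take (j - i - 1) (drop (Suc i) w) @ w ! j # drop (Suc j) w"
    using 2 by (metis append_take_drop_id)
  have "w = take i w @ w ! i # drop (Suc i) w" using 1 by (metis append_take_drop_id)
  with 3 show ?thesis by simp
qed

lemma in_mid: "l \<in> set (take (j - i - 1) (drop (Suc i) w)) \<Longrightarrow> j < length w \<Longrightarrow> \<exists>k. i < k \<and> k < j \<and> l = w ! k"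
proof -
  assume l: "l \<in> set (take (j - i - 1) (drop (Suc i) w))" and j: "j < length w"
  then obtain t where t: "t < length (take (j - i - 1) (drop (Suc i) w))" "l = take (j - i - 1) (drop (Suc i) w) ! t"
    by (auto simp: in_set_conv_nth)
  then have "t < j - i - 1" by simp
  moreover have "Suc i \<le> length w" using t by (auto simp: less_diff_conv)
  moreover have "l = w ! (Suc i + t)" using t calculation(2) by (simp add: nth_drop)
  ultimately show ?thesis by (intro exI[of _ "Suc i + t"]) auto
qed

lemma reduced_good:
  assumes "reduced V adj G w"
  shows "valid w \<and> pf w \<and> idf w"
proof -
  have v: "valid w" using assms unfolding reduced_def by simp
  have nored: "\<not> mv\<^sup>*\<^sup>* w w'" if "length w' < length w" for w'
    using assms that unfolding reduced_def by blast
  have "idf w"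
  proof (rule ccontr)
    assume "\<not> idf w"
    then obtain v x where vx: "(v, x) \<in> set w" "x = \<one>\<^bsub>G v\<^esub>" unfolding idf_def by auto
    then obtain ws us where w: "w = ws @ (v, x) # us" by (meson split_list)
    have "mv w (ws @ us)" using move.delete[where ws=ws and us=us and v=v and V=V and G=G and adj=adj] v w vx by simp
    then show False using nored[of "ws @ us"] w by auto
  qed
  moreover have "pf w"
  proof (rule ccontr)
    assume "\<not> pf w"
    then obtain i j where ij: "i < j" "j < length w" "fst (w ! i) = fst (w ! j)"
      and btw: "\<And>k. i < k \<Longrightarrow> k < j \<Longrightarrow> adj (fst (w ! i)) (fst (w ! k))"
      unfolding pf_def pinch_def by auto
    define L where "L = take (j - i - 1) (drop (Suc i) w)"
    have E: "take i w @ [w ! i] @ L @ [w ! j] @ drop (Suc j) w = w"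
      unfolding L_def by (rule decomp[OF ij(1,2), symmetric])
    have ad: "\<forall>l\<in>set L. adj (fst l) (fst (w ! j))"
    proof
      fix l assume "l \<in> set L"
      then have "l \<in> set (take (j - i - 1) (drop (Suc i) w))" by (simp add: L_def)
      from in_mid[OF this ij(2)] obtain k where "i < k" "k < j" "l = w ! k" by blast
      then have "adj (fst (w ! j)) (fst l)" using btw[of k] ij(3) by simp
      then show "adj (fst l) (fst (w ! j))" by (rule adj_sym)
    qed
    have vv: "valid ((take i w @ [w ! i]) @ L @ [w ! j] @ drop (Suc j) w)" using v E by simp
    have s0: "shf ((take i w @ [w ! i]) @ L @ [w ! j] @ drop (Suc j) w) ((take i w @ [w ! i]) @ [w ! j] @ L @ drop (Suc j) w)"
      by (rule shf_front[OF vv ad])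
    then have s: "shf w ((take i w @ [w ! i]) @ [w ! j] @ L @ drop (Suc j) w)"
      using E by simp
    let ?w1 = "(take i w @ [w ! i]) @ [w ! j] @ L @ drop (Suc j) w"
    have v1: "valid ?w1" using shf_valid[OF s v] .
    obtain a x where a: "w ! i = (a, x)" by fastforce
    obtain y where b: "w ! j = (a, y)" using ij(3) a by (cases "w ! j") simp
    have "mv ?w1 (take i w @ [(a, x \<otimes>\<^bsub>G a\<^esub> y)] @ L @ drop (Suc j) w)"
      using move.merge[where ws="take i w" and v=a and x=x and y=y and us="L @ drop (Suc j) w" and V=V and G=G and adj=adj]
        v1 a b by simp
    then have "mv\<^sup>*\<^sup>* w (take i w @ [(a, x \<otimes>\<^bsub>G a\<^esub> y)] @ L @ drop (Suc j) w)"
      using shf_move[OF s] by (meson rtranclp.rtrancl_into_rtrancl)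
    moreover have "length (take i w @ [(a, x \<otimes>\<^bsub>G a\<^esub> y)] @ L @ drop (Suc j) w) < length w"
      using shf_length[OF s] by simp
    ultimately show False using nored by blast
  qed
  ultimately show ?thesis using v by simp
qed

end


context gp begin

lemma weq_trans: "weq a b \<Longrightarrow> weq b c \<Longrightarrow> weq a c"
  unfolding word_equiv_def by (rule equivclp_trans)
lemma weq_sym: "weq a b \<Longrightarrow> weq b a"
  unfolding word_equiv_def by (rule equivclp_sym)
lemma mv_weq: "mv a b \<Longrightarrow> weq a b"
  unfolding word_equiv_def by (rule r_into_equivclp)

lemma cancel:
  "valid X \<Longrightarrow> valid C \<Longrightarrow> valid Y \<Longrightarrow> weq (X @ winv C @ C @ Y) (X @ Y)"
proof (induction C)
  case Nil then show ?case unfolding word_equiv_def by simp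
next
  case (Cons c C)
  obtain v x where c: "c = (v, x)" by fastforce
  have v: "v \<in> V" "x \<in> carrier (G v)" using Cons c by auto
  have gv: "group (G v)" using grp v by simp
  have vi: "valid (winv C)" using Cons valid_winv by simp
  have ix: "inv\<^bsub>G v\<^esub> x \<in> carrier (G v)" using gv v by (simp add: group.inv_closed)
  have 1: "X @ winv (c # C) @ (c # C) @ Y = (X @ winv C) @ [(v, inv\<^bsub>G v\<^esub> x), (v, x)] @ (C @ Y)"
    using c by simp
  have "mv ((X @ winv C) @ [(v, inv\<^bsub>G v\<^esub> x), (v, x)] @ (C @ Y)) ((X @ winv C) @ [(v, inv\<^bsub>G v\<^esub> x \<otimes>\<^bsub>G v\<^esub> x)] @ (C @ Y))"
    by (rule move.merge) (use Cons v vi ix c in simp)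
  moreover have "inv\<^bsub>G v\<^esub> x \<otimes>\<^bsub>G v\<^esub> x = \<one>\<^bsub>G v\<^esub>" using gv v by (simp add: group.l_inv)
  moreover have "mv ((X @ winv C) @ [(v, \<one>\<^bsub>G v\<^esub>)] @ (C @ Y)) ((X @ winv C) @ (C @ Y))"
    by (rule move.delete) (use Cons v vi c gv in \<open>simp add: monoid.one_closed group.is_monoid\<close>)
  ultimately have "weq (X @ winv (c # C) @ (c # C) @ Y) (X @ winv C @ C @ Y)"
    using 1 mv_weq weq_trans by (metis append_assoc)
  moreover have "weq (X @ winv C @ C @ Y) (X @ Y)" using Cons by simp
  ultimately show ?case by (rule weq_trans)
qed

definition mrg :: "('v \<times> 'g) list \<Rightarrow> ('v \<times> 'g) list \<Rightarrow> ('v \<times> 'g) list" where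
  "mrg Bh Bg = map (\<lambda>(a, b). (fst b, inv\<^bsub>G (fst b)\<^esub> (snd a) \<otimes>\<^bsub>G (fst b)\<^esub> snd b)) (zip Bh Bg)"

lemma fst_winv: "fst ` set (winv w) = fst ` set w"
  by (induction w) auto

lemma block:
  "length Bh = length Bg \<Longrightarrow> (\<forall>i<length Bg. fst (Bh ! i) = fst (Bg ! i)) \<Longrightarrow>
   (\<forall>i<length Bg. \<forall>j<length Bg. i \<noteq> j \<longrightarrow> adj (fst (Bg ! i)) (fst (Bg ! j))) \<Longrightarrow>
   valid X \<Longrightarrow> valid Bh \<Longrightarrow> valid Bg \<Longrightarrow> valid Y \<Longrightarrow>
   weq (X @ winv Bh @ Bg @ Y) (X @ mrg Bh Bg @ Y)"
proof (induction Bh arbitrary: Bg X)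
  case Nil then show ?case by (simp add: mrg_def word_equiv_def)
next
  case (Cons a Bh)
  obtain b Bg' where Bg: "Bg = b # Bg'" using Cons.prems(1) by (cases Bg) auto
  obtain v x where a: "a = (v, x)" by fastforce
  obtain y where b: "b = (v, y)" using Cons.prems(2) Bg a by (cases b) auto
  have v: "v \<in> V" "x \<in> carrier (G v)" "y \<in> carrier (G v)" using Cons.prems a b Bg by auto
  have gv: "group (G v)" using grp v by simp
  have vi: "valid (winv Bh)" using Cons.prems valid_winv by simp
  have ix: "inv\<^bsub>G v\<^esub> x \<in> carrier (G v)" using gv v by (simp add: group.inv_closed)
  define z where "z = inv\<^bsub>G v\<^esub> x \<otimes>\<^bsub>G v\<^esub> y"
  have zc: "z \<in> carrier (G v)" unfolding z_def using gv v ix by (simp add: group.is_monoid monoid.m_closed)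
  have 1: "X @ winv (a # Bh) @ Bg @ Y = (X @ winv Bh) @ [(v, inv\<^bsub>G v\<^esub> x), (v, y)] @ (Bg' @ Y)"
    using a b Bg by simp
  have m: "mv ((X @ winv Bh) @ [(v, inv\<^bsub>G v\<^esub> x), (v, y)] @ (Bg' @ Y)) ((X @ winv Bh) @ [(v, z)] @ (Bg' @ Y))"
    unfolding z_def by (rule move.merge) (use Cons.prems v vi ix Bg in simp)
  have ad: "\<forall>l\<in>set (winv Bh). adj (fst l) (fst (v, z))"
  proof
    fix l assume "l \<in> set (winv Bh)"
    then have "fst l \<in> fst ` set Bh" using fst_winv by blast
    then obtain i where i: "i < length Bh" "fst l = fst (Bh ! i)" by (auto simp: in_set_conv_nth)
    have "fst ((a # Bh) ! Suc i) = fst ((b # Bg') ! Suc i)" using spec[OF Cons.prems(2), of "Suc i"] Cons.prems(1) Bg i by simp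
    then have "fst (Bh ! i) = fst (Bg' ! i)" by simp
    moreover have "adj (fst (Bg ! Suc i)) (fst (Bg ! 0))" using Cons.prems(3)[rule_format, of "Suc i" 0] Cons.prems(1) Bg i by simp
    ultimately show "adj (fst l) (fst (v, z))" using i Bg b by simp
  qed
  have s: "shf (X @ winv Bh @ [(v, z)] @ (Bg' @ Y)) (X @ [(v, z)] @ winv Bh @ (Bg' @ Y))"
    by (rule shf_front[OF _ ad]) (use Cons.prems vi zc v Bg in simp)
  have IH: "weq ((X @ [(v, z)]) @ winv Bh @ Bg' @ Y) ((X @ [(v, z)]) @ mrg Bh Bg' @ Y)"
  proof (rule Cons.IH)
    show "length Bh = length Bg'" using Cons.prems Bg by simp
    show "\<forall>i<length Bg'. fst (Bh ! i) = fst (Bg' ! i)" using Cons.prems(2) Bg by auto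
    show "\<forall>i<length Bg'. \<forall>j<length Bg'. i \<noteq> j \<longrightarrow> adj (fst (Bg' ! i)) (fst (Bg' ! j))"
    proof (intro allI impI)
      fix i j assume "i < length Bg'" "j < length Bg'" "i \<noteq> j"
      then show "adj (fst (Bg' ! i)) (fst (Bg' ! j))" using Cons.prems(3) Bg
        by (metis Suc_less_eq length_Cons nth_Cons_Suc old.nat.inject)
    qed
  qed (use Cons.prems Bg zc v in simp_all)
  have "mrg (a # Bh) Bg = (v, z) # mrg Bh Bg'" using a b Bg by (simp add: mrg_def z_def)
  moreover have "weq (X @ winv (a # Bh) @ Bg @ Y) (X @ [(v, z)] @ winv Bh @ (Bg' @ Y))"
    using 1 m s mv_weq shf_weq weq_trans by (metis append_assoc)
  ultimately show ?case using IH weq_trans by simp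
qed

end


context gp begin

definition mvto :: "('v \<times> 'g) list \<Rightarrow> nat \<Rightarrow> nat \<Rightarrow> ('v \<times> 'g) list" where
  "mvto w c s = take c w @ [w ! s] @ take (s - c) (drop c w) @ drop (Suc s) w"

lemma mvto_decomp: "c \<le> s \<Longrightarrow> s < length w \<Longrightarrow> take c w @ take (s - c) (drop c w) @ [w ! s] @ drop (Suc s) w = w"
proof -
  assume a: "c \<le> s" "s < length w"
  have "drop (s - c) (drop c w) = w ! s # drop (Suc s) w" using a by (simp add: Cons_nth_drop_Suc)
  then have "drop c w = take (s - c) (drop c w) @ w ! s # drop (Suc s) w" by (metis append_take_drop_id)
  then show ?thesis by (metis append_Cons append_Nil append_take_drop_id)
qed

lemma mvto_length: "c \<le> s \<Longrightarrow> s < length w \<Longrightarrow> length (mvto w c s) = length w"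
  unfolding mvto_def by simp

lemma mvto_shf:
  assumes "c \<le> s" "s < length w" "valid w" "\<And>k. c \<le> k \<Longrightarrow> k < s \<Longrightarrow> adj (fst (w ! k)) (fst (w ! s))"
  shows "shf w (mvto w c s)"
proof -
  have E: "take c w @ take (s - c) (drop c w) @ [w ! s] @ drop (Suc s) w = w" using mvto_decomp assms by simp
  have ad: "\<forall>l\<in>set (take (s - c) (drop c w)). adj (fst l) (fst (w ! s))"
  proof
    fix l assume "l \<in> set (take (s - c) (drop c w))"
    then obtain t where t: "t < s - c" "l = w ! (c + t)" using assms(1,2) by (auto simp: in_set_conv_nth)
    then show "adj (fst l) (fst (w ! s))" using assms(4)[of "c + t"] by simp
  qed
  have vv: "valid (take c w @ take (s - c) (drop c w) @ [w ! s] @ drop (Suc s) w)" using E assms(3) by simp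
  show ?thesis using shf_front[OF vv ad] E unfolding mvto_def by simp
qed

lemma mvto_nth:
  assumes "c \<le> s" "s < length w" "i < length w"
  shows "mvto w c s ! i = (if i < c then w ! i else if i = c then w ! s else if i \<le> s then w ! (i - 1) else w ! i)"
proof -
  have lc: "length (take c w) = c" using assms by simp
  have lm: "length (take (s - c) (drop c w)) = s - c" using assms by simp
  consider "i < c" | "i = c" | "c < i \<and> i \<le> s" | "s < i" by linarith
  then show ?thesis
  proof cases
    case 1 then show ?thesis unfolding mvto_def using lc by (simp add: nth_append)
  next
    case 2 then show ?thesis unfolding mvto_def using lc by (simp add: nth_append)
  next
    case 3
    have "i - Suc c < s - c" using 3 by linarith
    with 3 have "mvto w c s ! i = take (s - c) (drop c w) ! (i - c - 1)"
      unfolding mvto_def using lc lm assms by (simp add: nth_append)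
    also have "\<dots> = drop c w ! (i - c - 1)" using \<open>i - Suc c < s - c\<close> by simp
    also have "\<dots> = w ! (c + (i - c - 1))" using assms by simp
    also have "c + (i - c - 1) = i - 1" using 3 by linarith
    finally show ?thesis using 3 by simp
  next
    case 4
    have "\<not> i - Suc c < s - c" using 4 by linarith
    with 4 have "mvto w c s ! i = drop (Suc s) w ! (i - c - 1 - (s - c))"
      unfolding mvto_def using lc lm assms by (simp add: nth_append)
    also have "\<dots> = w ! i" using 4 assms by simp
    finally show ?thesis using 4 assms(1) by simp
  qed
qed

lemma map_fst_winv: "map fst (winv w) = rev (map fst w)"
  by (induction w) auto

end


context gp begin

definition cfg where
  "cfg gr hr q p gs hs \<longleftrightarrow> shf gr gs \<and> shf hr hs \<and> q + p \<le> min (length hr) (length gr) \<and>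
     (\<forall>i<q. gs ! i = hs ! i) \<and>
     (\<forall>i. q \<le> i \<and> i < q + p \<longrightarrow> fst (gs ! i) = fst (hs ! i) \<and> snd (gs ! i) \<noteq> snd (hs ! i)) \<and>
     (\<forall>i<p. \<forall>j<p. i \<noteq> j \<longrightarrow> adj (fst (gs ! (q + i))) (fst (gs ! (q + j))))"

lemma ext_eq:
  assumes c: "cfg gr hr q p gs hs" and vg: "valid gs" and vh: "valid hs"
    and s: "q + p \<le> s" "s < length hs" and t: "q + p \<le> t" "t < length gs" and e: "hs ! s = gs ! t"
    and hadj: "\<And>k. q \<le> k \<Longrightarrow> k < s \<Longrightarrow> adj (fst (hs ! k)) (fst (hs ! s))"
    and gadj: "\<And>k. q \<le> k \<Longrightarrow> k < t \<Longrightarrow> adj (fst (gs ! k)) (fst (gs ! t))"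
  shows "cfg gr hr (q + 1) p (mvto gs q t) (mvto hs q s)"
proof -
  have lg: "length gs = length gr" using c shf_length unfolding cfg_def by blast
  have lh: "length hs = length hr" using c shf_length unfolding cfg_def by blast
  have qt: "q \<le> t" "q \<le> s" using s t by auto
  have G: "\<And>i. i < length gs \<Longrightarrow> mvto gs q t ! i = (if i < q then gs ! i else if i = q then gs ! t else if i \<le> t then gs ! (i - 1) else gs ! i)"
    using mvto_nth[OF qt(1) t(2)] by blast
  have H: "\<And>i. i < length hs \<Longrightarrow> mvto hs q s ! i = (if i < q then hs ! i else if i = q then hs ! s else if i \<le> s then hs ! (i - 1) else hs ! i)"
    using mvto_nth[OF qt(2) s(2)] by blast
  have "shf gr (mvto gs q t)"
    using c mvto_shf[OF qt(1) t(2) vg gadj] unfolding cfg_def by (meson rtranclp_trans)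
  moreover have "shf hr (mvto hs q s)"
    using c mvto_shf[OF qt(2) s(2) vh hadj] unfolding cfg_def by (meson rtranclp_trans)
  moreover have "q + 1 + p \<le> min (length hr) (length gr)" using s t lg lh by simp
  moreover have "\<forall>i<q + 1. mvto gs q t ! i = mvto hs q s ! i"
  proof (intro allI impI)
    fix i assume "i < q + 1"
    then show "mvto gs q t ! i = mvto hs q s ! i"
      using G[of i] H[of i] c e s t unfolding cfg_def by (cases "i < q") auto
  qed
  moreover have "\<forall>i. q + 1 \<le> i \<and> i < q + 1 + p \<longrightarrow> fst (mvto gs q t ! i) = fst (mvto hs q s ! i) \<and> snd (mvto gs q t ! i) \<noteq> snd (mvto hs q s ! i)"
  proof (intro allI impI)
    fix i assume i: "q + 1 \<le> i \<and> i < q + 1 + p"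
    then have "mvto gs q t ! i = gs ! (i - 1)" "mvto hs q s ! i = hs ! (i - 1)"
      using G[of i] H[of i] s t by auto
    moreover have "q \<le> i - 1 \<and> i - 1 < q + p" using i by auto
    ultimately show "fst (mvto gs q t ! i) = fst (mvto hs q s ! i) \<and> snd (mvto gs q t ! i) \<noteq> snd (mvto hs q s ! i)"
      using c unfolding cfg_def by simp
  qed
  moreover have "\<forall>i<p. \<forall>j<p. i \<noteq> j \<longrightarrow> adj (fst (mvto gs q t ! (q + 1 + i))) (fst (mvto gs q t ! (q + 1 + j)))"
  proof (intro allI impI)
    fix i j assume ij: "i < p" "j < p" "i \<noteq> j"
    then have "mvto gs q t ! (q + 1 + i) = gs ! (q + i)" "mvto gs q t ! (q + 1 + j) = gs ! (q + j)"
      using G[of "q + 1 + i"] G[of "q + 1 + j"] t by auto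
    then show "adj (fst (mvto gs q t ! (q + 1 + i))) (fst (mvto gs q t ! (q + 1 + j)))"
    proof -
      have "adj (fst (gs ! (q + i))) (fst (gs ! (q + j)))" using c ij unfolding cfg_def by blast
      then show ?thesis using \<open>mvto gs q t ! (q + 1 + i) = gs ! (q + i)\<close> \<open>mvto gs q t ! (q + 1 + j) = gs ! (q + j)\<close> by simp
    qed
  qed
  ultimately show ?thesis unfolding cfg_def by simp
qed

lemma ext_neq:
  assumes c: "cfg gr hr q p gs hs" and vg: "valid gs" and vh: "valid hs"
    and s: "q + p \<le> s" "s < length hs" and t: "q + p \<le> t" "t < length gs"
    and e: "fst (hs ! s) = fst (gs ! t)" "snd (gs ! t) \<noteq> snd (hs ! s)"
    and hadj: "\<And>k. q + p \<le> k \<Longrightarrow> k < s \<Longrightarrow> adj (fst (hs ! k)) (fst (hs ! s))"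
    and gadj: "\<And>k. q \<le> k \<Longrightarrow> k < t \<Longrightarrow> adj (fst (gs ! k)) (fst (gs ! t))"
  shows "cfg gr hr q (p + 1) (mvto gs (q + p) t) (mvto hs (q + p) s)"
proof -
  have lg: "length gs = length gr" using c shf_length unfolding cfg_def by blast
  have lh: "length hs = length hr" using c shf_length unfolding cfg_def by blast
  have G: "\<And>i. i < length gs \<Longrightarrow> mvto gs (q + p) t ! i = (if i < q + p then gs ! i else if i = q + p then gs ! t else if i \<le> t then gs ! (i - 1) else gs ! i)"
    using mvto_nth[OF t(1) t(2)] by blast
  have H: "\<And>i. i < length hs \<Longrightarrow> mvto hs (q + p) s ! i = (if i < q + p then hs ! i else if i = q + p then hs ! s else if i \<le> s then hs ! (i - 1) else hs ! i)"
    using mvto_nth[OF s(1) s(2)] by blast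
  have "shf gr (mvto gs (q + p) t)"
    using c mvto_shf[OF t(1) t(2) vg] gadj unfolding cfg_def by (meson rtranclp_trans le_add1 le_trans)
  moreover have "shf hr (mvto hs (q + p) s)"
    using c mvto_shf[OF s(1) s(2) vh hadj] unfolding cfg_def by (meson rtranclp_trans)
  moreover have "q + (p + 1) \<le> min (length hr) (length gr)" using s t lg lh by simp
  moreover have "\<forall>i<q. mvto gs (q + p) t ! i = mvto hs (q + p) s ! i"
  proof (intro allI impI)
    fix i assume "i < q"
    then show "mvto gs (q + p) t ! i = mvto hs (q + p) s ! i"
      using G[of i] H[of i] c s t unfolding cfg_def by auto
  qed
  moreover have "\<forall>i. q \<le> i \<and> i < q + (p + 1) \<longrightarrow> fst (mvto gs (q + p) t ! i) = fst (mvto hs (q + p) s ! i) \<and> snd (mvto gs (q + p) t ! i) \<noteq> snd (mvto hs (q + p) s ! i)"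
  proof (intro allI impI)
    fix i assume i: "q \<le> i \<and> i < q + (p + 1)"
    show "fst (mvto gs (q + p) t ! i) = fst (mvto hs (q + p) s ! i) \<and> snd (mvto gs (q + p) t ! i) \<noteq> snd (mvto hs (q + p) s ! i)"
    proof (cases "i < q + p")
      case True
      then show ?thesis using G[of i] H[of i] s t c i unfolding cfg_def by auto
    next
      case False
      then have "i = q + p" using i by simp
      then show ?thesis using G[of i] H[of i] s t e by auto
    qed
  qed
  moreover have "\<forall>i<p + 1. \<forall>j<p + 1. i \<noteq> j \<longrightarrow> adj (fst (mvto gs (q + p) t ! (q + i))) (fst (mvto gs (q + p) t ! (q + j)))"
  proof (intro allI impI)
    fix i j assume ij: "i < p + 1" "j < p + 1" "i \<noteq> j"
    have X: "\<And>k. k < p + 1 \<Longrightarrow> mvto gs (q + p) t ! (q + k) = (if k < p then gs ! (q + k) else gs ! t)"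
      using G t by auto
    consider "i < p \<and> j < p" | "i = p \<and> j < p" | "i < p \<and> j = p" using ij by linarith
    then show "adj (fst (mvto gs (q + p) t ! (q + i))) (fst (mvto gs (q + p) t ! (q + j)))"
    proof cases
      case 1
      then have "adj (fst (gs ! (q + i))) (fst (gs ! (q + j)))" using c ij unfolding cfg_def by blast
      then show ?thesis using X[of i] X[of j] 1 by simp
    next
      case 2
      then have "adj (fst (gs ! (q + j))) (fst (gs ! t))" using gadj[of "q + j"] t by simp
      then show ?thesis using X[of i] X[of j] 2 by (simp add: adj_sym)
    next
      case 3
      then show ?thesis using X[of i] X[of j] gadj[of "q + i"] t by simp
    qed
  qed
  ultimately show ?thesis unfolding cfg_def by simp
qed

end


context gp begin

definition mid :: "('v \<times> 'g) list \<Rightarrow> ('v \<times> 'g) list \<Rightarrow> nat \<Rightarrow> nat \<Rightarrow> ('v \<times> 'g) list" where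
  "mid gs hs q p = map (\<lambda>i. (fst (gs ! i), inv\<^bsub>G (fst (gs ! i))\<^esub> (snd (hs ! i)) \<otimes>\<^bsub>G (fst (gs ! i))\<^esub> snd (gs ! i))) [q..<q + p]"

definition rw where "rw gs hs q p = winv (drop (q + p) hs) @ mid gs hs q p @ drop (q + p) gs"

lemma pfD:
  assumes "pf w" "i < j" "j < length w" "fst (w ! i) = fst (w ! j)"
    "\<And>k. i < k \<Longrightarrow> k < j \<Longrightarrow> adj (fst (w ! i)) (fst (w ! k))"
  shows False
proof -
  have "pinch (map fst w)" unfolding pinch_def
    by (rule exI[of _ i], rule exI[of _ j]) (use assms in auto)
  then show False using assms(1) unfolding pf_def by simp
qed

lemma map_fst_mid: "q + p \<le> length gs \<Longrightarrow> map fst (mid gs hs q p) = map fst (take p (drop q gs))"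
  by (rule nth_equalityI) (auto simp: mid_def)

lemma vr_eq:
  assumes "q + p \<le> length gs"
  shows "map fst (rw gs hs q p) = rev (map fst (drop (q + p) hs)) @ map fst (drop q gs)"
proof -
  have "drop q gs = take p (drop q gs) @ drop (q + p) gs"
    by (metis append_take_drop_id drop_drop add.commute)
  then have "map fst (drop q gs) = map fst (take p (drop q gs)) @ map fst (drop (q + p) gs)"
    by (metis map_append)
  then show ?thesis unfolding rw_def using map_fst_mid[OF assms] by (simp add: map_fst_winv)
qed

lemma vr_nth:
  assumes "q + p \<le> length gs" "q + p \<le> length hs" "l < (length hs - (q + p)) + (length gs - q)"
  shows "map fst (rw gs hs q p) ! l = (if l < length hs - (q + p) then fst (hs ! (length hs - 1 - l)) else fst (gs ! (l - (length hs - (q + p)) + q)))"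
proof -
  let ?a = "length hs - (q + p)"
  have "map fst (rw gs hs q p) ! l = (rev (map fst (drop (q + p) hs)) @ map fst (drop q gs)) ! l"
    using vr_eq[OF assms(1)] by simp
  also have "\<dots> = (if l < ?a then fst (hs ! (length hs - 1 - l)) else fst (gs ! (l - ?a + q)))"
  proof (cases "l < ?a")
    case True
    then have "(rev (map fst (drop (q + p) hs)) @ map fst (drop q gs)) ! l = rev (map fst (drop (q + p) hs)) ! l"
      by (simp add: nth_append)
    also have "\<dots> = map fst (drop (q + p) hs) ! (?a - Suc l)" using True by (simp add: rev_nth)
    also have "\<dots> = fst (hs ! (q + p + (?a - Suc l)))" using True assms by simp
    also have "q + p + (?a - Suc l) = length hs - 1 - l" using True assms by linarith
    finally show ?thesis using True by simp
  next
    case False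
    then have "(rev (map fst (drop (q + p) hs)) @ map fst (drop q gs)) ! l = map fst (drop q gs) ! (l - ?a)"
      by (simp add: nth_append)
    also have "\<dots> = fst (gs ! (q + (l - ?a)))" using False assms by simp
    finally show ?thesis using False by (simp add: add.commute)
  qed
  finally show ?thesis .
qed

lemma length_rw: "q + p \<le> length gs \<Longrightarrow> q + p \<le> length hs \<Longrightarrow> length (rw gs hs q p) = (length hs - (q + p)) + (length gs - q)"
  unfolding rw_def mid_def by simp

end


context gp begin

lemma max_pf:
  assumes c: "cfg gr hr q p gs hs" and pfg: "pf gs" and pfh: "pf hs" and vg: "valid gs" and vh: "valid hs"
    and mx: "\<And>q' p' gs' hs'. cfg gr hr q' p' gs' hs' \<Longrightarrow> q' + p' \<le> q + p"
  shows "pf (rw gs hs q p)"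
proof (rule ccontr)
  define m where "m = length hs"
  define n where "n = length gs"
  define a where "a = m - (q + p)"
  define vr where "vr = map fst (rw gs hs q p)"
  have lg: "length gs = length gr" using c shf_length unfolding cfg_def by blast
  have lh: "length hs = length hr" using c shf_length unfolding cfg_def by blast
  have qpn: "q + p \<le> n" "q + p \<le> m" using c lg lh unfolding cfg_def m_def n_def by auto
  have BLK: "\<And>i. q \<le> i \<Longrightarrow> i < q + p \<Longrightarrow> fst (gs ! i) = fst (hs ! i)" using c unfolding cfg_def by blast
  have CLQ: "\<And>i j. i < p \<Longrightarrow> j < p \<Longrightarrow> i \<noteq> j \<Longrightarrow> adj (fst (gs ! (q + i))) (fst (gs ! (q + j)))"
    using c unfolding cfg_def by blast
  have len: "length vr = a + (n - q)" unfolding vr_def a_def m_def n_def using length_rw qpn m_def n_def by simp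
  have VR: "\<And>l. l < a + (n - q) \<Longrightarrow> vr ! l = (if l < a then fst (hs ! (m - 1 - l)) else fst (gs ! (l - a + q)))"
    unfolding vr_def a_def m_def n_def using vr_nth qpn m_def n_def by simp
  assume "\<not> pf (rw gs hs q p)"
  then obtain i j where ij: "i < j" "j < length vr" "vr ! i = vr ! j"
    and btw: "\<And>k. i < k \<Longrightarrow> k < j \<Longrightarrow> adj (vr ! i) (vr ! k)"
    unfolding pf_def pinch_def vr_def by blast
  have jl: "j < a + (n - q)" using ij len by simp
  consider "j < a" | "a \<le> i" | "i < a \<and> a \<le> j \<and> j < a + p" | "i < a \<and> a + p \<le> j" by linarith
  then show False
  proof cases
    case 1
    have ei: "vr ! i = fst (hs ! (m - 1 - i))" using VR[of i] 1 ij jl by simp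
    have ej: "vr ! j = fst (hs ! (m - 1 - j))" using VR[of j] 1 jl by simp
    show False
    proof (rule pfD[OF pfh, of "m - 1 - j" "m - 1 - i"])
      show "m - 1 - j < m - 1 - i" using 1 ij a_def qpn by linarith
      show "m - 1 - i < length hs" using 1 ij a_def qpn m_def by linarith
      show "fst (hs ! (m - 1 - j)) = fst (hs ! (m - 1 - i))" using ei ej ij by simp
      fix k assume k: "m - 1 - j < k" "k < m - 1 - i"
      define l where "l = m - 1 - k"
      have l: "i < l" "l < j" "m - 1 - l = k" using k 1 a_def qpn unfolding l_def by linarith+
      have "vr ! l = fst (hs ! k)" using VR[of l] l 1 jl by simp
      then show "adj (fst (hs ! (m - 1 - j))) (fst (hs ! k))" using btw[OF l(1,2)] ei ej ij by simp
    qed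
  next
    case 2
    have ei: "vr ! i = fst (gs ! (i - a + q))" using VR[of i] 2 ij jl by simp
    have ej: "vr ! j = fst (gs ! (j - a + q))" using VR[of j] 2 ij jl by simp
    show False
    proof (rule pfD[OF pfg, of "i - a + q" "j - a + q"])
      show "i - a + q < j - a + q" using 2 ij by linarith
      show "j - a + q < length gs" using jl qpn n_def 2 ij by linarith
      show "fst (gs ! (i - a + q)) = fst (gs ! (j - a + q))" using ei ej ij by simp
      fix k assume k: "i - a + q < k" "k < j - a + q"
      define l where "l = k - q + a"
      have l: "i < l" "l < j" "l - a + q = k" "a \<le> l" using k 2 unfolding l_def by linarith+
      have "vr ! l = fst (gs ! k)" using VR[of l] l jl by simp
      then show "adj (fst (gs ! (i - a + q))) (fst (gs ! k))" using btw[OF l(1,2)] ei by simp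
    qed
  next
    case 3
    have ei: "vr ! i = fst (hs ! (m - 1 - i))" using VR[of i] 3 ij jl by simp
    have ej: "vr ! j = fst (gs ! (j - a + q))" using VR[of j] 3 jl by simp
    have jq: "j - a + q = q + (j - a)" using 3 by linarith
    have "q \<le> q + (j - a)" "q + (j - a) < q + p" using 3 by linarith+
    then have hb: "fst (hs ! (q + (j - a))) = fst (gs ! (q + (j - a)))" using BLK[of "q + (j - a)"] by simp
    show False
    proof (rule pfD[OF pfh, of "q + (j - a)" "m - 1 - i"])
      show "q + (j - a) < m - 1 - i" using 3 a_def qpn by linarith
      show "m - 1 - i < length hs" using 3 a_def qpn m_def by linarith
      show "fst (hs ! (q + (j - a))) = fst (hs ! (m - 1 - i))" using ei ej ij hb jq by simp
      fix k assume k: "q + (j - a) < k" "k < m - 1 - i"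
      show "adj (fst (hs ! (q + (j - a)))) (fst (hs ! k))"
      proof (cases "k < q + p")
        case True
        have "adj (fst (gs ! (q + (j - a)))) (fst (gs ! (q + (k - q))))"
          by (rule CLQ) (use 3 k True in linarith)+
        moreover have "fst (gs ! k) = fst (hs ! k)" using BLK[of k] k True by simp
        ultimately show ?thesis using hb k by simp
      next
        case False
        define l where "l = m - 1 - k"
        have l: "i < l" "l < j" "m - 1 - l = k" "l < a" using k 3 False a_def qpn unfolding l_def by linarith+
        have "vr ! l = fst (hs ! k)" using VR[of l] l jl by simp
        then show ?thesis using btw[OF l(1,2)] ei ej ij hb jq by simp
      qed
    qed
  next
    case 4
    define s where "s = m - 1 - i"
    define t where "t = j - a + q"
    define u where "u = vr ! i"
    have s: "q + p \<le> s" "s < length hs" using 4 a_def qpn m_def unfolding s_def by linarith+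
    have t: "q + p \<le> t" "t < length gs" using 4 jl qpn n_def unfolding t_def by linarith+
    have us: "fst (hs ! s) = u" using VR[of i] 4 jl unfolding u_def s_def by simp
    have ut: "fst (gs ! t) = u" using VR[of j] 4 jl ij unfolding u_def t_def by simp
    have hbt: "adj u (fst (hs ! k))" if "q + p \<le> k" "k < s" for k
    proof -
      define l where "l = m - 1 - k"
      have l: "i < l" "l < j" "m - 1 - l = k" "l < a" using that 4 a_def qpn unfolding l_def s_def by linarith+
      have "vr ! l = fst (hs ! k)" using VR[of l] l jl by simp
      then show ?thesis using btw[OF l(1,2)] unfolding u_def by simp
    qed
    have bb: "adj u (fst (gs ! k))" if "q \<le> k" "k < q + p" for k
    proof -
      define l where "l = a + (k - q)"
      have l: "i < l" "l < j" "l - a + q = k" "a \<le> l" using that 4 unfolding l_def by linarith+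
      have "vr ! l = fst (gs ! k)" using VR[of l] l jl by simp
      then show ?thesis using btw[OF l(1,2)] unfolding u_def by simp
    qed
    have gb: "adj u (fst (gs ! k))" if "q + p \<le> k" "k < t" for k
    proof -
      define l where "l = k - q + a"
      have l: "i < l" "l < j" "l - a + q = k" "a \<le> l" using that 4 unfolding l_def t_def by linarith+
      have "vr ! l = fst (gs ! k)" using VR[of l] l jl by simp
      then show ?thesis using btw[OF l(1,2)] unfolding u_def by simp
    qed
    have gadj: "adj (fst (gs ! k)) (fst (gs ! t))" if "q \<le> k" "k < t" for k
    proof (cases "k < q + p")
      case True then show ?thesis using bb[of k] that ut adj_sym by simp
    next
      case False then show ?thesis using gb[of k] that ut adj_sym by simp
    qed
    show False
    proof (cases "snd (hs ! s) = snd (gs ! t)")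
      case True
      have e: "hs ! s = gs ! t" using True us ut by (simp add: prod_eq_iff)
      have hadj: "adj (fst (hs ! k)) (fst (hs ! s))" if "q \<le> k" "k < s" for k
      proof (cases "k < q + p")
        case True then show ?thesis using bb[of k] BLK[of k] that us adj_sym by simp
      next
        case False then show ?thesis using hbt[of k] that us adj_sym by simp
      qed
      have "cfg gr hr (q + 1) p (mvto gs q t) (mvto hs q s)"
        by (rule ext_eq[OF c vg vh s t e hadj gadj])
      from mx[OF this] show False by simp
    next
      case False
      have hadj: "adj (fst (hs ! k)) (fst (hs ! s))" if "q + p \<le> k" "k < s" for k
        using hbt[of k] that us adj_sym by simp
      have "cfg gr hr q (p + 1) (mvto gs (q + p) t) (mvto hs (q + p) s)"
        by (rule ext_neq[OF c vg vh s t _ _ hadj gadj]) (use us ut False in auto)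
      from mx[OF this] show False by simp
    qed
  qed
qed

end


context gp begin

lemma idf_append[simp]: "idf (a @ b) \<longleftrightarrow> idf a \<and> idf b"
  unfolding idf_def by auto

lemma idf_winv: "valid w \<Longrightarrow> idf w \<Longrightarrow> idf (winv w)"
proof (induction w)
  case Nil then show ?case by (simp add: idf_def)
next
  case (Cons x w)
  have g: "group (G (fst x))" using Cons.prems grp by simp
  have "inv\<^bsub>G (fst x)\<^esub> snd x \<noteq> \<one>\<^bsub>G (fst x)\<^esub>"
    using Cons.prems group.inv_eq_1_iff[OF g] unfolding idf_def by simp
  then show ?case using Cons unfolding idf_def by auto
qed

lemma valid_nth: "valid w \<Longrightarrow> k < length w \<Longrightarrow> fst (w ! k) \<in> V \<and> snd (w ! k) \<in> carrier (G (fst (w ! k)))"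
proof -
  assume v: "valid w" and k: "k < length w"
  then have "w ! k \<in> set w" by simp
  then obtain ys zs where w: "w = ys @ (w ! k) # zs" by (meson split_list)
  have "valid (ys @ (w ! k) # zs)" using v w by metis
  then show ?thesis by simp
qed

lemma ttd: "take a w @ take b (drop a w) @ drop (a + b) w = w"
proof -
  have 1: "drop b (drop a w) = drop (a + b) w" by (simp add: add.commute)
  have "take b (drop a w) @ drop (a + b) w = drop a w" by (metis 1 append_take_drop_id)
  then show ?thesis by (metis append_take_drop_id)
qed

lemma final:
  assumes fV: "finite V"
    and gr: "reduced V adj G gr" "length gr = n" and hr: "reduced V adj G hr" "length hr = m"
  shows "\<exists>q p gs hs. shf gr gs \<and> shf hr hs \<and> q + p \<le> min m n \<and>
     (\<forall>i<q. gs ! i = hs ! i) \<and>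
     (\<forall>i. q \<le> i \<and> i < q + p \<longrightarrow> fst (gs ! i) = fst (hs ! i) \<and> snd (gs ! i) \<noteq> snd (hs ! i)) \<and>
     (\<forall>i<p. \<forall>j<p. i \<noteq> j \<longrightarrow> adj (fst (gs ! (q + i))) (fst (gs ! (q + j)))) \<and>
     reduced V adj G (rw gs hs q p) \<and> weq (winv hs @ gs) (rw gs hs q p) \<and>
     p \<le> clique_number V adj \<and> valid gs \<and> valid hs \<and> pf gs \<and> pf hs \<and> idf gs \<and> idf hs"
proof -
  have ggr: "valid gr" "pf gr" "idf gr" using reduced_good[OF gr(1)] by auto
  have ghr: "valid hr" "pf hr" "idf hr" using reduced_good[OF hr(1)] by auto
  define P where "P = (\<lambda>(q, p, gs, hs). cfg gr hr q p gs hs)"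
  define f :: "nat \<times> nat \<times> ('v \<times> 'g) list \<times> ('v \<times> 'g) list \<Rightarrow> nat" where "f = (\<lambda>(q, p, gs, hs). q + p)"
  have P0: "P (0, 0, gr, hr)" unfolding P_def cfg_def by simp
  have Pb: "\<forall>y. P y \<longrightarrow> f y < min m n + 1"
  proof (intro allI impI)
    fix y assume Py: "P y"
    obtain q p gs hs where y: "y = (q, p, gs, hs)" by (cases y) auto
    have "cfg gr hr q p gs hs" using Py y unfolding P_def by simp
    then have "q + p \<le> min m n" unfolding cfg_def using gr(2) hr(2) by simp
    moreover have "f y = q + p" using y unfolding f_def by simp
    ultimately show "f y < min m n + 1" by linarith
  qed
  obtain x where x: "P x" "\<forall>y. P y \<longrightarrow> f y \<le> f x"
    using Lattices_Big.ex_has_greatest_nat[of P "(0, 0, gr, hr)" f "min m n + 1", OF P0 Pb] by blast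
  obtain q p gs hs where xe: "x = (q, p, gs, hs)" by (cases x) auto
  have c: "cfg gr hr q p gs hs" using x(1) xe unfolding P_def by simp
  have mx: "q' + p' \<le> q + p" if "cfg gr hr q' p' gs' hs'" for q' p' gs' hs'
  proof -
    have "P (q', p', gs', hs')" using that unfolding P_def by simp
    then have "f (q', p', gs', hs') \<le> f x" using x(2) by blast
    then show ?thesis using xe unfolding f_def by simp
  qed
  have sg: "shf gr gs" using c unfolding cfg_def by blast
  have sh: "shf hr hs" using c unfolding cfg_def by blast
  have vg: "valid gs" "pf gs" "idf gs" "length gs = n"
    using shf_valid[OF sg ggr(1)] shf_pf[OF sg ggr(2)] shf_idf[OF sg ggr(3)] shf_length[OF sg] gr(2) by simp_all
  have vh: "valid hs" "pf hs" "idf hs" "length hs = m"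
    using shf_valid[OF sh ghr(1)] shf_pf[OF sh ghr(2)] shf_idf[OF sh ghr(3)] shf_length[OF sh] hr(2) by simp_all
  have qpn: "q + p \<le> n" "q + p \<le> m" using c gr(2) hr(2) unfolding cfg_def by simp_all
  have PRE: "\<And>i. i < q \<Longrightarrow> gs ! i = hs ! i" using c unfolding cfg_def by blast
  have BLK: "\<And>i. q \<le> i \<Longrightarrow> i < q + p \<Longrightarrow> fst (gs ! i) = fst (hs ! i) \<and> snd (gs ! i) \<noteq> snd (hs ! i)"
    using c unfolding cfg_def by blast
  have CLQ: "\<And>i j. i < p \<Longrightarrow> j < p \<Longrightarrow> i \<noteq> j \<Longrightarrow> adj (fst (gs ! (q + i))) (fst (gs ! (q + j)))"
    using c unfolding cfg_def by blast
  have pfr: "pf (rw gs hs q p)" by (rule max_pf[OF c vg(2) vh(2) vg(1) vh(1)], rule mx, assumption)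
  have vmid: "valid (mid gs hs q p)"
    unfolding valid_word_def mid_def
  proof (clarsimp)
    fix i assume i: "q \<le> i" "i < q + p"
    have in1: "fst (gs ! i) \<in> V" "snd (gs ! i) \<in> carrier (G (fst (gs ! i)))"
      using valid_nth[OF vg(1), of i] vg(4) qpn i by auto
    have "snd (hs ! i) \<in> carrier (G (fst (hs ! i)))"
      using valid_nth[OF vh(1), of i] vh(4) qpn i by auto
    then have in2: "snd (hs ! i) \<in> carrier (G (fst (gs ! i)))" using BLK[OF i] by simp
    have g: "group (G (fst (gs ! i)))" using grp in1 by simp
    show "fst (gs ! i) \<in> V \<and> inv\<^bsub>G (fst (gs ! i))\<^esub> snd (hs ! i) \<otimes>\<^bsub>G (fst (gs ! i))\<^esub> snd (gs ! i) \<in> carrier (G (fst (gs ! i)))"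
      using in1 in2 g by (simp add: group.inv_closed group.is_monoid monoid.m_closed)
  qed
  have idmid: "idf (mid gs hs q p)"
    unfolding idf_def mid_def
  proof (clarsimp)
    fix i assume i: "q \<le> i" "i < q + p"
      and e: "inv\<^bsub>G (fst (gs ! i))\<^esub> snd (hs ! i) \<otimes>\<^bsub>G (fst (gs ! i))\<^esub> snd (gs ! i) = \<one>\<^bsub>G (fst (gs ! i))\<^esub>"
    have in1: "fst (gs ! i) \<in> V" "snd (gs ! i) \<in> carrier (G (fst (gs ! i)))"
      using valid_nth[OF vg(1), of i] vg(4) qpn i by auto
    have "snd (hs ! i) \<in> carrier (G (fst (hs ! i)))"
      using valid_nth[OF vh(1), of i] vh(4) qpn i by auto
    then have in2: "snd (hs ! i) \<in> carrier (G (fst (gs ! i)))" using BLK[OF i] by simp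
    have g: "group (G (fst (gs ! i)))" using grp in1 by simp
    have "snd (gs ! i) = snd (hs ! i) \<otimes>\<^bsub>G (fst (gs ! i))\<^esub> \<one>\<^bsub>G (fst (gs ! i))\<^esub>"
      using group.inv_solve_left'[OF g monoid.one_closed[OF group.is_monoid[OF g]] in2 in1(2)] e by simp
    then have "snd (gs ! i) = snd (hs ! i)" using g in2 by (simp add: monoid.r_one group.is_monoid)
    then show False using BLK[OF i] by simp
  qed
  have vdr: "valid (drop (q + p) hs)" "valid (drop (q + p) gs)"
    using vh(1) vg(1) valid_append append_take_drop_id by metis+
  have idr: "idf (drop (q + p) hs)" "idf (drop (q + p) gs)"
    using vh(3) vg(3) idf_append append_take_drop_id by metis+
  have validr: "valid (rw gs hs q p)" unfolding rw_def using vmid vdr valid_winv by simp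
  have idfr: "idf (rw gs hs q p)" unfolding rw_def using idmid idr idf_winv vdr by simp
  have redr: "reduced V adj G (rw gs hs q p)" using good_reduced[OF validr pfr idfr] .
  define C where "C = take q gs"
  define Bh where "Bh = take p (drop q hs)"
  define Bg where "Bg = take p (drop q gs)"
  define Rh where "Rh = drop (q + p) hs"
  define Rg where "Rg = drop (q + p) gs"
  have Ch: "take q hs = C" unfolding C_def
    by (rule nth_equalityI) (use vg(4) vh(4) qpn PRE in auto)
  have hs_eq: "hs = C @ Bh @ Rh" using ttd[where a=q and b=p and w=hs] Ch unfolding Bh_def Rh_def by simp
  have gs_eq: "gs = C @ Bg @ Rg" using ttd[where a=q and b=p and w=gs] unfolding C_def Bg_def Rg_def by simp
  have vC: "valid C" "valid Bh" "valid Bg" "valid Rh" "valid Rg"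
    using vg(1) vh(1) hs_eq gs_eq by (metis valid_append)+
  have "winv hs @ gs = (winv Rh @ winv Bh) @ winv C @ C @ Bg @ Rg" using hs_eq gs_eq by simp
  moreover have "weq ((winv Rh @ winv Bh) @ winv C @ C @ Bg @ Rg) ((winv Rh @ winv Bh) @ Bg @ Rg)"
    by (rule cancel) (use vC valid_winv in simp_all)
  moreover have lB: "length Bh = p" "length Bg = p" unfolding Bh_def Bg_def using qpn vg(4) vh(4) by auto
  have "weq (winv Rh @ winv Bh @ Bg @ Rg) (winv Rh @ mrg Bh Bg @ Rg)"
  proof (rule block)
    show "length Bh = length Bg" using lB by simp
    show "\<forall>i<length Bg. fst (Bh ! i) = fst (Bg ! i)"
      using BLK lB qpn vg(4) vh(4) unfolding Bh_def Bg_def by auto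
    show "\<forall>i<length Bg. \<forall>j<length Bg. i \<noteq> j \<longrightarrow> adj (fst (Bg ! i)) (fst (Bg ! j))"
      using CLQ lB qpn vg(4) unfolding Bg_def by auto
  qed (use vC valid_winv in simp_all)
  moreover have "mrg Bh Bg = mid gs hs q p"
    by (rule nth_equalityI) (use lB qpn vg(4) vh(4) in \<open>auto simp: mrg_def mid_def Bh_def Bg_def\<close>)
  ultimately have weqr: "weq (winv hs @ gs) (rw gs hs q p)"
    unfolding rw_def Rh_def[symmetric] Rg_def[symmetric] using weq_trans by auto
  define cf where "cf = (\<lambda>i. fst (gs ! (q + i)))"
  have inj: "inj_on cf {..<p}"
  proof
    fix i j assume "i \<in> {..<p}" "j \<in> {..<p}" "cf i = cf j"
    then show "i = j" using CLQ[of i j] adj_irr unfolding cf_def by auto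
  qed
  have cl: "clique V adj (cf ` {..<p})"
    unfolding clique_def
  proof (intro conjI ballI impI)
    show "cf ` {..<p} \<subseteq> V"
    proof
      fix v assume "v \<in> cf ` {..<p}"
      then obtain i where i: "i < p" "v = cf i" by auto
      have "gs ! (q + i) \<in> set gs" using i qpn vg(4) by simp
      then show "v \<in> V" using vg(1) i unfolding valid_word_def cf_def by auto
    qed
    fix u w assume "u \<in> cf ` {..<p}" "w \<in> cf ` {..<p}" "u \<noteq> w"
    then show "adj u w" using CLQ unfolding cf_def by auto
  qed
  have "card (cf ` {..<p}) = p" using card_image[OF inj] by simp
  moreover have "finite {card C | C. clique V adj C}"
  proof (rule finite_subset)
    show "{card C | C. clique V adj C} \<subseteq> card ` Pow V" unfolding clique_def by auto
  qed (use fV in simp)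
  ultimately have pk: "p \<le> clique_number V adj"
    unfolding clique_number_def using cl by (metis (mono_tags, lifting) Max_ge mem_Collect_eq)
  show ?thesis
    apply (rule exI[of _ q], rule exI[of _ p], rule exI[of _ gs], rule exI[of _ hs])
    using sg sh qpn PRE BLK CLQ redr weqr pk vg vh by auto
qed

end

theorem mainTheorem4:
  fixes V :: "'v set" and adj :: "'v \<Rightarrow> 'v \<Rightarrow> bool"
    and G :: "'v \<Rightarrow> ('g, 'b) monoid_scheme"
    and wg wh :: "('v, 'g) syllable list" and m n :: nat
  assumes "finite V"
    and "\<And>u w. adj u w \<Longrightarrow> u \<in> V \<and> w \<in> V"
    and "\<And>u w. adj u w \<Longrightarrow> adj w u"
    and "\<And>u. \<not> adj u u"
    and "\<And>v. v \<in> V \<Longrightarrow> group (G v)"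
    and "valid_word V G wg" and "valid_word V G wh"
    and "\<exists>w. reduced V adj G w \<and> word_equiv V adj G w wh \<and> length w = m"
    and "\<exists>w. reduced V adj G w \<and> word_equiv V adj G w wg \<and> length w = n"
  shows "\<exists>q p gs hs.
     q \<le> min m n \<and> p \<le> clique_number V adj \<and> q + p \<le> min m n \<and>
     reduced V adj G gs \<and> word_equiv V adj G gs wg \<and> length gs = n \<and>
     reduced V adj G hs \<and> word_equiv V adj G hs wh \<and> length hs = m \<and>
     (\<forall>i<q. gs ! i = hs ! i) \<and>
     (\<forall>i. q \<le> i \<and> i < q + p \<longrightarrow> fst (gs ! i) = fst (hs ! i) \<and> snd (gs ! i) \<noteq> snd (hs ! i)) \<and>
     (let r = word_inv G (drop (q + p) hs)
            @ map (\<lambda>i. (fst (gs ! i), inv\<^bsub>G (fst (gs ! i))\<^esub> (snd (hs ! i)) \<otimes>\<^bsub>G (fst (gs ! i))\<^esub> snd (gs ! i)))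
                  [q..<q + p]
            @ drop (q + p) gs
      in reduced V adj G r \<and> word_equiv V adj G r (word_inv G wh @ wg)) \<and>
     (\<forall>i<p. \<forall>j<p. fst (gs ! (q + j)) \<in> star adj (fst (gs ! (q + i))))"
proof -
  interpret gp V adj G unfolding gp_def using assms(2-5) by blast
  obtain hr where hr: "reduced V adj G hr" "word_equiv V adj G hr wh" "length hr = m" using assms(8) by blast
  obtain gr where gr: "reduced V adj G gr" "word_equiv V adj G gr wg" "length gr = n" using assms(9) by blast
  obtain q p gs hs where
    F: "shf gr gs" "shf hr hs" "q + p \<le> min m n"
     "\<forall>i<q. gs ! i = hs ! i"
     "\<forall>i. q \<le> i \<and> i < q + p \<longrightarrow> fst (gs ! i) = fst (hs ! i) \<and> snd (gs ! i) \<noteq> snd (hs ! i)"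
     "\<forall>i<p. \<forall>j<p. i \<noteq> j \<longrightarrow> adj (fst (gs ! (q + i))) (fst (gs ! (q + j)))"
     "reduced V adj G (rw gs hs q p)" "weq (winv hs @ gs) (rw gs hs q p)"
     "p \<le> clique_number V adj" "valid gs" "valid hs" "pf gs" "pf hs" "idf gs" "idf hs"
    using final[OF assms(1) gr(1) gr(3) hr(1) hr(3)] by blast
  have lg: "length gs = n" using shf_length[OF F(1)] gr by simp
  have lh: "length hs = m" using shf_length[OF F(2)] hr by simp
  have wgs: "weq gs wg" using weq_trans[OF weq_sym[OF shf_weq[OF F(1)]] gr(2)] .
  have whs: "weq hs wh" using weq_trans[OF weq_sym[OF shf_weq[OF F(2)]] hr(2)] .
  have e1: "weq (winv wh @ wg) (winv hs @ wg)"
    using weq_ctxt[OF weq_winv[OF weq_sym[OF whs]], of "[]" wg] assms(6) by simp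
  have e2: "weq (winv hs @ wg) (winv hs @ gs)"
    using weq_ctxt[OF weq_sym[OF wgs], of "winv hs" "[]"] valid_winv[OF F(11)] by simp
  have wr: "weq (rw gs hs q p) (winv wh @ wg)"
    using weq_sym[OF weq_trans[OF weq_trans[OF e1 e2] F(8)]] .
  have st: "\<forall>i<p. \<forall>j<p. fst (gs ! (q + j)) \<in> star adj (fst (gs ! (q + i)))"
    using F(6) unfolding star_def by auto
  show ?thesis
    apply (rule exI[of _ q], rule exI[of _ p], rule exI[of _ gs], rule exI[of _ hs])
    using F lg lh wgs whs wr st good_reduced[OF F(10) F(12) F(14)] good_reduced[OF F(11) F(13) F(15)]
    unfolding Let_def rw_def mid_def by auto
qed


end
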